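(* Let $k\ge1$ and $S_a,S_b\in\{0,1\}^{k^2}$. Let $G$ be the undirected weighted graph on vertices $\ell_i,\ell_i',r_i,r_i'$ ($1\le i\le k$) with edges $\{\ell_i,r_i\}$ and $\{\ell_i',r_i'\}$ of weight $1$ for each $i$, the edge $\{\ell_i,\ell_j'\}$ of weight $2$ whenever $S_a[(i-1)k+j]=1$, and the edge $\{r_i,r_j'\}$ of weight $2$ whenever $S_b[(i-1)k+j]=1$. If there is an index $m$ with $S_a[m]=S_b[m]=1$, then $G$ contains a simple cycle of weight $6$; otherwise every simple cycle of $G$ has weight at least $8$.
   Context: For a bit string $S$, $S[m]$ denotes its $m$-th bit. *)

theory Defs
  imports Main
begin

text \<open>Bit strings S in {0,1}^(k^2) are lists of booleans of length k^2;
  the m-th bit S[m] (1-based, 1 <= m <= k^2) is S ! (m - 1).\<close>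

definition bit :: "bool list \<Rightarrow> nat \<Rightarrow> bool" where
  "bit S m = S ! (m - 1)"

datatype vtx = Lv nat | Lv' nat | Rv nat | Rv' nat

definition edgesG :: "nat \<Rightarrow> bool list \<Rightarrow> bool list \<Rightarrow> (vtx set \<times> nat) set" where
  "edgesG k Sa Sb =
     {({Lv i, Rv i}, 1) | i. 1 \<le> i \<and> i \<le> k}
   \<union> {({Lv' i, Rv' i}, 1) | i. 1 \<le> i \<and> i \<le> k}
   \<union> {({Lv i, Lv' j}, 2) | i j. 1 \<le> i \<and> i \<le> k \<and> 1 \<le> j \<and> j \<le> k \<and> bit Sa ((i - 1) * k + j)}
   \<union> {({Rv i, Rv' j}, 2) | i j. 1 \<le> i \<and> i \<le> k \<and> 1 \<le> j \<and> j \<le> k \<and> bit Sb ((i - 1) * k + j)}"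

definition simple_cycle :: "(vtx set \<times> nat) set \<Rightarrow> vtx list \<Rightarrow> nat list \<Rightarrow> bool" where
  "simple_cycle E vs ws \<longleftrightarrow>
     length vs \<ge> 3 \<and> distinct vs \<and> length ws = length vs \<and>
     (\<forall>i < length vs. ({vs ! i, vs ! (Suc i mod length vs)}, ws ! i) \<in> E)"

definition cycle_weight :: "nat list \<Rightarrow> nat" where
  "cycle_weight ws = sum_list ws"

end

theory Submission
  imports Defs
begin

fun mate :: "vtx \<Rightarrow> vtx" where
  "mate (Lv i) = Rv i" | "mate (Rv i) = Lv i" | "mate (Lv' i) = Rv' i" | "mate (Rv' i) = Lv' i"

fun side :: "vtx \<Rightarrow> bool" where
  "side (Lv i) = False" | "side (Lv' i) = False" | "side (Rv i) = True" | "side (Rv' i) = True"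

fun col :: "vtx \<Rightarrow> bool" where
  "col (Lv i) = False" | "col (Rv' i) = False" | "col (Lv' i) = True" | "col (Rv i) = True"

lemma mate_mate[simp]: "mate (mate v) = v" by (cases v) auto

lemma edge_w: "(e,w) \<in> edgesG k Sa Sb \<Longrightarrow> w = 1 \<or> w = 2"
  unfolding edgesG_def by auto

lemma edge1: "({a,b},1) \<in> edgesG k Sa Sb \<Longrightarrow> b = mate a"
  unfolding edgesG_def by (auto simp: doubleton_eq_iff)

lemma edge_side: "({a,b},w) \<in> edgesG k Sa Sb \<Longrightarrow> (w = 1) = (side a \<noteq> side b)"
  unfolding edgesG_def by (auto simp: doubleton_eq_iff)

lemma edge_col: "({a,b},w) \<in> edgesG k Sa Sb \<Longrightarrow> col a \<noteq> col b"
  unfolding edgesG_def by (auto simp: doubleton_eq_iff)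

lemma idx: "1\<le>i \<Longrightarrow> i\<le>(k::nat) \<Longrightarrow> 1\<le>j \<Longrightarrow> j\<le>k \<Longrightarrow> 1 \<le> (i-1)*k+j \<and> (i-1)*k+j \<le> k^2"
proof -
  assume a: "1\<le>i" "i\<le>k" "1\<le>j" "j\<le>k"
  have "(i-1)*k \<le> (k-1)*k" using a by (simp add: mult_le_mono1)
  moreover have "k^2 = (k-1)*k + k" using a by (cases k) (auto simp: power2_eq_square)
  ultimately show ?thesis using a by linarith
qed

lemma square:
  assumes nc: "\<not>(\<exists>m. 1\<le>m \<and> m\<le>k^2 \<and> bit Sa m \<and> bit Sb m)"
    and e1: "({a,b},1) \<in> edgesG k Sa Sb" and e2: "({b,c},2) \<in> edgesG k Sa Sb"
    and e3: "({c,d},1) \<in> edgesG k Sa Sb" and e4: "({d,a},2) \<in> edgesG k Sa Sb"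
  shows False
proof -
  have b: "b = mate a" using e1 by (rule edge1)
  have d: "d = mate c" using e3 by (rule edge1)
  show False using e2 e4 nc idx unfolding b d edgesG_def
    by (cases a; cases c) (auto simp: doubleton_eq_iff)
qed

theorem mainTheorem15:
  fixes k :: nat and Sa Sb :: "bool list"
  assumes "k \<ge> 1" and "length Sa = k^2" and "length Sb = k^2"
  shows "((\<exists>m. 1 \<le> m \<and> m \<le> k^2 \<and> bit Sa m \<and> bit Sb m) \<longrightarrow>
            (\<exists>vs ws. simple_cycle (edgesG k Sa Sb) vs ws \<and> cycle_weight ws = 6))
       \<and> ((\<not> (\<exists>m. 1 \<le> m \<and> m \<le> k^2 \<and> bit Sa m \<and> bit Sb m)) \<longrightarrow>
            (\<forall>vs ws. simple_cycle (edgesG k Sa Sb) vs ws \<longrightarrow> cycle_weight ws \<ge> 8))"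
proof (intro conjI impI allI)
  assume "\<exists>m. 1 \<le> m \<and> m \<le> k^2 \<and> bit Sa m \<and> bit Sb m"
  then obtain m where m: "1 \<le> m" "m \<le> k^2" "bit Sa m" "bit Sb m" by blast
  define i where "i = (m - 1) div k + 1"
  define j where "j = (m - 1) mod k + 1"
  have kp: "k > 0" using assms(1) by simp
  have mij: "m = (i-1)*k + j"
  proof -
    have "(m-1) div k * k + (m-1) mod k = m - 1" by (rule div_mult_mod_eq)
    thus ?thesis using m(1) unfolding i_def j_def by simp
  qed
  have i1: "1 \<le> i" "1 \<le> j" unfolding i_def j_def by auto
  have jk: "j \<le> k" unfolding j_def using kp by (simp add: Suc_leI)
  have "(m-1) div k < k"
  proof -
    have "m - 1 < k*k" using m(1) m(2) kp by (simp add: power2_eq_square)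
    thus ?thesis by (simp add: div_less_iff_less_mult mult.commute kp)
  qed
  hence ik: "i \<le> k" unfolding i_def by simp
  let ?vs = "[Lv i, Lv' j, Rv' j, Rv i]"
  let ?ws = "[2,1,2,1::nat]"
  have "simple_cycle (edgesG k Sa Sb) ?vs ?ws"
    unfolding simple_cycle_def
  proof (intro conjI allI impI)
    fix t assume "t < length ?vs"
    hence "t = 0 \<or> t = 1 \<or> t = 2 \<or> t = 3" by auto
    moreover have "({Lv i, Lv' j}, 2) \<in> edgesG k Sa Sb"
      unfolding edgesG_def using i1 ik jk m(3) mij by blast
    moreover have "({Lv' j, Rv' j}, 1) \<in> edgesG k Sa Sb"
      unfolding edgesG_def using i1 ik jk by blast
    moreover have "({Rv' j, Rv i}, 2) \<in> edgesG k Sa Sb"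
    proof -
      have "({Rv i, Rv' j}, 2) \<in> edgesG k Sa Sb"
        unfolding edgesG_def using i1 ik jk m(4) mij by blast
      thus ?thesis by (simp add: insert_commute)
    qed
    moreover have "({Rv i, Lv i}, 1) \<in> edgesG k Sa Sb"
    proof -
      have "({Lv i, Rv i}, 1) \<in> edgesG k Sa Sb"
        unfolding edgesG_def using i1 ik by blast
      thus ?thesis by (simp add: insert_commute)
    qed
    ultimately show "({?vs ! t, ?vs ! (Suc t mod length ?vs)}, ?ws ! t) \<in> edgesG k Sa Sb"
      by auto
  qed auto
  moreover have "cycle_weight ?ws = 6" by (simp add: cycle_weight_def)
  ultimately show "\<exists>vs ws. simple_cycle (edgesG k Sa Sb) vs ws \<and> cycle_weight ws = 6" by blast
next
  fix vs ws
  assume nc: "\<not> (\<exists>m. 1 \<le> m \<and> m \<le> k^2 \<and> bit Sa m \<and> bit Sb m)"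
    and sc: "simple_cycle (edgesG k Sa Sb) vs ws"
  define n where "n = length vs"
  have n3: "n \<ge> 3" and dist: "distinct vs" and lw: "length ws = n"
    and E: "\<And>i. i < n \<Longrightarrow> ({vs ! i, vs ! (Suc i mod n)}, ws ! i) \<in> edgesG k Sa Sb"
    using sc unfolding simple_cycle_def n_def by auto
  have w12: "\<And>i. i < n \<Longrightarrow> ws!i = 1 \<or> ws!i = 2" using E edge_w by blast
  have pair: "ws!i + ws!(Suc i mod n) \<ge> 3" if i: "i < n" for i
  proof (rule ccontr)
    assume nt: "\<not> ws!i + ws!(Suc i mod n) \<ge> 3"
    define j where "j = Suc i mod n"
    have jn: "j < n" unfolding j_def using n3 by simp
    have "ws!i = 1" "ws!j = 1" using w12[OF i] w12[OF jn] nt unfolding j_def by auto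
    hence "vs!j = mate (vs!i)" "vs!(Suc j mod n) = mate (vs!j)"
      using E[OF i] E[OF jn] edge1 unfolding j_def by metis+
    hence "vs!(Suc j mod n) = vs!i" by simp
    moreover have "Suc j mod n < n" using n3 by simp
    ultimately have "Suc j mod n = i" using dist i nth_eq_iff_index_eq n_def by metis
    moreover have "Suc j mod n = (i+2) mod n" unfolding j_def by (simp add: mod_Suc_eq)
    ultimately have "(i+2) mod n = i" by simp
    show False
    proof (cases "i+2<n")
      case False
      have "(i+2) mod n = (i+2-n) mod n" using False by (simp add: le_mod_geq)
      also have "\<dots> = i+2-n" using i n3 by simp
      finally show False using \<open>(i+2) mod n = i\<close> i n3 False by linarith
    qed (use \<open>(i+2) mod n = i\<close> in simp)
  qed
  have colalt: "col (vs!i) = (if even i then col (vs!0) else \<not> col (vs!0))" if "i < n" for i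
    using that
  proof (induction i)
    case 0 then show ?case by simp
  next
    case (Suc i)
    have "col (vs!i) \<noteq> col (vs!(Suc i))" using E[of i] Suc.prems edge_col by fastforce
    then show ?case using Suc by auto
  qed
  have evn: "even n"
  proof -
    have "n - 1 < n" and "Suc (n-1) mod n = 0" using n3 by auto
    hence "col (vs!(n-1)) \<noteq> col (vs!0)" using E[of "n-1"] edge_col by fastforce
    with colalt[of "n-1"] n3 have "odd (n-1)" by (auto split: if_splits)
    thus ?thesis using n3 by simp
  qed
  have sumeq: "cycle_weight ws = (\<Sum>i<n. ws!i)"
    unfolding cycle_weight_def using lw by (simp add: sum_list_sum_nth atLeast0LessThan)
  have shift: "(\<Sum>i<n. ws!(Suc i mod n)) = (\<Sum>i<n. ws!i)"
  proof -
    obtain m where nm: "n = Suc m" using n3 by (cases n) auto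
    have "(\<Sum>i<Suc m. ws!(Suc i mod Suc m)) = (\<Sum>i<m. ws!(Suc i)) + ws!0"
    proof -
      have "(\<Sum>i<m. ws!(Suc i mod Suc m)) = (\<Sum>i<m. ws!(Suc i))"
        by (rule sum.cong) auto
      thus ?thesis by (simp add: sum.lessThan_Suc)
    qed
    also have "\<dots> = (\<Sum>i<Suc m. ws!i)" by (subst sum.lessThan_Suc_shift) simp
    finally show ?thesis using nm by simp
  qed
  have "3*n \<le> (\<Sum>i<n. ws!i + ws!(Suc i mod n))"
  proof -
    have "(\<Sum>i<n. (3::nat)) \<le> (\<Sum>i<n. ws!i + ws!(Suc i mod n))"
      by (rule sum_mono) (use pair in auto)
    thus ?thesis by simp
  qed
  hence tw: "3*n \<le> 2 * cycle_weight ws" using shift sumeq by (simp add: sum.distrib)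
  show "cycle_weight ws \<ge> 8"
  proof (cases "n \<ge> 6")
    case True thus ?thesis using tw by linarith
  next
    case False
    with n3 evn have n4: "n = 4" by presburger
    have E0: "({vs!0, vs!1}, ws!0) \<in> edgesG k Sa Sb"
    proof -
      have "Suc 0 mod n = 1" "(0::nat) < n" using n4 by simp_all
      thus ?thesis using E[of 0] by metis
    qed
    have E1: "({vs!1, vs!2}, ws!1) \<in> edgesG k Sa Sb"
    proof -
      have "Suc 1 mod n = 2" "(1::nat) < n" using n4 by simp_all
      thus ?thesis using E[of 1] by metis
    qed
    have E2: "({vs!2, vs!3}, ws!2) \<in> edgesG k Sa Sb"
    proof -
      have "Suc 2 mod n = 3" "(2::nat) < n" using n4 by simp_all
      thus ?thesis using E[of 2] by metis
    qed
    have E3: "({vs!3, vs!0}, ws!3) \<in> edgesG k Sa Sb"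
    proof -
      have "Suc 3 mod n = 0" "(3::nat) < n" using n4 by simp_all
      thus ?thesis using E[of 3] by metis
    qed
    have cw: "cycle_weight ws = ws!0 + ws!1 + ws!2 + ws!3"
      using sumeq n4 by (simp add: eval_nat_numeral)
    have p0: "ws!0 + ws!1 \<ge> 3"
    proof -
      have "Suc 0 mod n = 1" "(0::nat) < n" using n4 by simp_all
      thus ?thesis using pair[of 0] by metis
    qed
    have p1: "ws!1 + ws!2 \<ge> 3"
    proof -
      have "Suc 1 mod n = 2" "(1::nat) < n" using n4 by simp_all
      thus ?thesis using pair[of 1] by metis
    qed
    have p2: "ws!2 + ws!3 \<ge> 3"
    proof -
      have "Suc 2 mod n = 3" "(2::nat) < n" using n4 by simp_all
      thus ?thesis using pair[of 2] by metis
    qed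
    have p3: "ws!3 + ws!0 \<ge> 3"
    proof -
      have "Suc 3 mod n = 0" "(3::nat) < n" using n4 by simp_all
      thus ?thesis using pair[of 3] by metis
    qed
    have s0: "(ws!0 = 1) = (side (vs!0) \<noteq> side (vs!1))" using E0 edge_side by blast
    have s1: "(ws!1 = 1) = (side (vs!1) \<noteq> side (vs!2))" using E1 edge_side by blast
    have s2: "(ws!2 = 1) = (side (vs!2) \<noteq> side (vs!3))" using E2 edge_side by blast
    have s3: "(ws!3 = 1) = (side (vs!3) \<noteq> side (vs!0))" using E3 edge_side by blast
    have w: "ws!0 = 1 \<or> ws!0 = 2" "ws!1 = 1 \<or> ws!1 = 2" "ws!2 = 1 \<or> ws!2 = 2" "ws!3 = 1 \<or> ws!3 = 2"
      using w12 n4 by auto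
    have nA: "\<not> (ws!0 = 1 \<and> ws!1 = 2 \<and> ws!2 = 1 \<and> ws!3 = 2)"
      using square[OF nc, of "vs!0" "vs!1" "vs!2" "vs!3"] E0 E1 E2 E3 by auto
    have nB: "\<not> (ws!1 = 1 \<and> ws!2 = 2 \<and> ws!3 = 1 \<and> ws!0 = 2)"
      using square[OF nc, of "vs!1" "vs!2" "vs!3" "vs!0"] E0 E1 E2 E3 by auto
    show ?thesis using cw p0 p1 p2 p3 s0 s1 s2 s3 w nA nB by auto
  qed
qed

end
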